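(* Consider the cone percolation process on $\mathbb{T}_d^+$ ($d\ge2$) with radius of influence distributed as $R$. Let $\rho$ be the smallest non-negative root of $\mathbb{E}(\rho^{d^R}) + (1-\rho)p_0 = \rho$, and let $\psi$ be the smallest non-negative root of $\mathbb{E}\big(\psi^{\frac{d}{d-1}(d^R-1)}\big) = \psi$. Then $$1-\rho \le \mathbb{P}_+[V] \le 1-\psi.$$
   Context: Let $d\ge 2$ and let $\mathbb{T}_d$ be the infinite tree in which every vertex has exactly $d+1$ neighbours. Fix a vertex $\mathcal{O}$ (the origin); $d(u,v)$ denotes graph distance. Write $u\le v$ if $u$ lies on the path from $\mathcal{O}$ to $v$ (so $\mathcal{O}\le v$ for all $v$). Fix a neighbour $w$ of $\mathcal{O}$ and let $\mathbb{T}_d^+$ be the subtree obtained by deleting all vertices $x$ with $w\le x$; in $\mathbb{T}_d^+$ every vertex $u$ has exactly $d$ neighbours $x$ with $u\le x$ (its children). Let $R$ be a random variable with values in $\{0,1,2,\dots\}$, $p_k=\mathbb{P}(R=k)$, and assume $p_0\in(0,1)$. Cone percolation on $G\in\{\mathbb{T}_d,\mathbb{T}_d^+\}$: to each vertex $u$ of $G$ attach an independent copy $R_u$ of $R$; let $B_u=\{v\in G: u\le v,\ d(u,v)\le R_u\}$; set $I_0=\{\mathcal{O}\}$, $I_{n+1}=\bigcup_{u\in I_n}B_u$ for $n\ge0$, $I=\bigcup_{n\ge0}I_n$, and let $V$ be the event $\{|I|=\infty\}$ (survival). $\mathbb{P}_+$ and $\mathbb{P}$ denote the probability measures of the process on $\mathbb{T}_d^+$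 and on $\mathbb{T}_d$ respectively. Convention: $x^0=1$ for all $x\ge0$. *)

theory Defs
  imports "HOL-Probability.Probability"
begin

text \<open>Vertices of the rooted tree T_d^+: finite words over the alphabet {0..<d};
  the origin is the empty word, the children of u are u @ [i] for i < d.
  u \<le> v (u on the path from the origin to v) is the prefix relation, and for u \<le> v
  the graph distance d(u,v) equals length v - length u.\<close>

definition tree_plus :: "nat \<Rightarrow> nat list set" where
  "tree_plus d = {u. \<forall>i\<in>set u. i < d}"

definition tree_le :: "nat list \<Rightarrow> nat list \<Rightarrow> bool" where
  "tree_le u v \<longleftrightarrow> (\<exists>w. v = u @ w)"

definition cone :: "nat \<Rightarrow> nat list \<Rightarrow> nat \<Rightarrow> nat list set" where
  "cone d u r = {v \<in> tree_plus d. tree_le u v \<and> length v - length u \<le> r}"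

fun infected :: "nat \<Rightarrow> (nat list \<Rightarrow> nat) \<Rightarrow> nat \<Rightarrow> nat list set" where
  "infected d \<omega> 0 = {[]}"
| "infected d \<omega> (Suc n) = (\<Union>u\<in>infected d \<omega> n. cone d u (\<omega> u))"

definition infected_all :: "nat \<Rightarrow> (nat list \<Rightarrow> nat) \<Rightarrow> nat list set" where
  "infected_all d \<omega> = (\<Union>n. infected d \<omega> n)"

definition cone_space :: "nat \<Rightarrow> nat pmf \<Rightarrow> (nat list \<Rightarrow> nat) measure" where
  "cone_space d p = PiM (tree_plus d) (\<lambda>_. measure_pmf p)"

definition survival :: "nat \<Rightarrow> nat pmf \<Rightarrow> (nat list \<Rightarrow> nat) set" where
  "survival d p = {\<omega> \<in> space (cone_space d p). infinite (infected_all d \<omega>)}"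

definition cpow :: "real \<Rightarrow> real \<Rightarrow> real" where
  "cpow x e = (if e = 0 then 1 else x powr e)"

end

theory Submission
  imports Defs
begin


definition sh :: "nat \<Rightarrow> (nat list \<Rightarrow> nat) \<Rightarrow> (nat list \<Rightarrow> nat)" where
  "sh c \<omega> = (\<lambda>u. \<omega> (c # u))"

fun Surv :: "nat \<Rightarrow> nat \<Rightarrow> nat \<Rightarrow> (nat list \<Rightarrow> nat) \<Rightarrow> bool" where
  "Surv d 0 t \<omega> = True"
| "Surv d (Suc n) t \<omega> = (1 \<le> max t (\<omega> []) \<and> (\<exists>c<d. Surv d n (max t (\<omega> []) - 1) (sh c \<omega>)))"

fun ipath :: "nat \<Rightarrow> (nat list \<Rightarrow> nat) \<Rightarrow> nat list \<Rightarrow> bool" where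
  "ipath t \<omega> [] = True"
| "ipath t \<omega> (c # v) = (1 \<le> max t (\<omega> []) \<and> ipath (max t (\<omega> []) - 1) (sh c \<omega>) v)"

inductive reach :: "nat \<Rightarrow> (nat list \<Rightarrow> nat) \<Rightarrow> nat list \<Rightarrow> bool" for d \<omega> where
  r0: "reach d \<omega> []"
| rs: "reach d \<omega> u \<Longrightarrow> v \<in> cone d u (\<omega> u) \<Longrightarrow> reach d \<omega> v"

lemma tree_Nil[simp]: "[] \<in> tree_plus d"
  by (simp add: tree_plus_def)

lemma tree_Cons[simp]: "c # v \<in> tree_plus d \<longleftrightarrow> c < d \<and> v \<in> tree_plus d"
  by (auto simp add: tree_plus_def)

lemma tree_append[simp]: "u @ v \<in> tree_plus d \<longleftrightarrow> u \<in> tree_plus d \<and> v \<in> tree_plus d"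
  by (auto simp add: tree_plus_def)

lemma infected_reach: "v \<in> infected d \<omega> n \<Longrightarrow> reach d \<omega> v"
proof (induction n arbitrary: v)
  case 0
  then show ?case by (simp add: reach.r0)
next
  case (Suc n)
  then obtain u where "u \<in> infected d \<omega> n" "v \<in> cone d u (\<omega> u)" by auto
  then show ?case using Suc.IH reach.rs by blast
qed

lemma reach_infected: "reach d \<omega> v \<Longrightarrow> \<exists>n. v \<in> infected d \<omega> n"
proof (induction rule: reach.induct)
  case r0
  then show ?case by (metis infected.simps(1) singletonI)
next
  case (rs u v)
  then obtain n where "u \<in> infected d \<omega> n" by auto
  then have "v \<in> infected d \<omega> (Suc n)" using rs by auto
  then show ?case by blast
qed

lemma infected_all_reach: "infected_all d \<omega> = {v. reach d \<omega> v}"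
proof
  show "infected_all d \<omega> \<subseteq> {v. reach d \<omega> v}"
    unfolding infected_all_def using infected_reach by auto
  show "{v. reach d \<omega> v} \<subseteq> infected_all d \<omega>"
  proof
    fix v assume "v \<in> {v. reach d \<omega> v}"
    then have "reach d \<omega> v" by simp
    then obtain n where "v \<in> infected d \<omega> n" using reach_infected by blast
    then show "v \<in> infected_all d \<omega>" unfolding infected_all_def by auto
  qed
qed

lemma lemA:
  assumes c: "c < d" and m: "1 \<le> max t (\<omega> [])"
    and r: "reach d ((fun_upd (sh c \<omega>) [] (max (max t (\<omega> []) - 1) (\<omega> [c])))) u"
  shows "reach d ((fun_upd \<omega> [] (max t (\<omega> [])))) (c # u)"
  using r
proof (induction rule: reach.induct)
  case r0
  have "[c] \<in> cone d [] (((fun_upd \<omega> [] (max t (\<omega> [])))) [])"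
    using c m by (simp add: cone_def tree_le_def)
  then show ?case by (rule reach.rs[OF reach.r0])
next
  case (rs u v)
  let ?W = "fun_upd \<omega> [] (max t (\<omega> []))"
  show ?case
  proof (cases "u = []")
    case True
    with rs have v: "v \<in> tree_plus d" "length v \<le> max (max t (\<omega> []) - 1) (\<omega> [c])"
      by (auto simp: cone_def)
    show ?thesis
    proof (cases "\<omega> [c] \<ge> max t (\<omega> []) - 1")
      case True
      have rc: "reach d ?W [c]"
        using c m by (auto intro!: reach.rs[OF reach.r0] simp: cone_def tree_le_def)
      have "c # v \<in> cone d [c] (?W [c])"
        using v True c by (auto simp: cone_def tree_le_def)
      then show ?thesis by (rule reach.rs[OF rc])
    next
      case False
      have "c # v \<in> cone d [] (?W [])"
        using v False c by (auto simp: cone_def tree_le_def)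
      then show ?thesis by (rule reach.rs[OF reach.r0])
    qed
  next
    case False
    with rs have "c # v \<in> cone d (c # u) (?W (c # u))"
      using c by (auto simp: cone_def tree_le_def sh_def)
    then show ?thesis by (rule reach.rs[OF rs.IH])
  qed
qed

lemma lem4: "ipath t \<omega> v \<Longrightarrow> v \<in> tree_plus d \<Longrightarrow> reach d ((fun_upd \<omega> [] (max t (\<omega> [])))) v"
proof (induction v arbitrary: t \<omega>)
  case Nil
  then show ?case by (simp add: reach.r0)
next
  case (Cons c v)
  then have "1 \<le> max t (\<omega> [])" "ipath (max t (\<omega> []) - 1) (sh c \<omega>) v" "c < d" "v \<in> tree_plus d"
    by auto
  with Cons.IH have "reach d ((fun_upd (sh c \<omega>) [] (max (max t (\<omega> []) - 1) (sh c \<omega> [])))) v" by blast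
  then have "reach d (fun_upd (sh c \<omega>) [] (max (max t (\<omega> []) - 1) (\<omega> [c]))) v"
    by (simp add: sh_def)
  then show ?case using lemA[of c d t \<omega> v] \<open>c < d\<close> \<open>1 \<le> _\<close> by blast
qed

lemma lemC: "length w \<le> max t (\<omega> []) \<Longrightarrow> ipath t \<omega> w"
proof (induction w arbitrary: t \<omega>)
  case Nil
  then show ?case by simp
next
  case (Cons c w)
  then show ?case by (auto intro!: Cons.IH)
qed

definition eff :: "nat \<Rightarrow> (nat list \<Rightarrow> nat) \<Rightarrow> nat list \<Rightarrow> nat" where
  "eff t \<omega> u = (if u = [] then max t (\<omega> []) else \<omega> u)"

lemma lemB: "ipath t \<omega> u \<Longrightarrow> length w \<le> eff t \<omega> u \<Longrightarrow> ipath t \<omega> (u @ w)"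
proof (induction u arbitrary: t \<omega>)
  case Nil
  then show ?case by (simp add: eff_def lemC)
next
  case (Cons c u)
  then have h: "1 \<le> max t (\<omega> [])" "ipath (max t (\<omega> []) - 1) (sh c \<omega>) u" by auto
  have "eff t \<omega> (c # u) \<le> eff (max t (\<omega> []) - 1) (sh c \<omega>) u"
    by (auto simp: eff_def sh_def)
  with Cons h show ?case by auto
qed

lemma lem7: "reach d ((fun_upd \<omega> [] (max t (\<omega> [])))) v \<Longrightarrow> ipath t \<omega> v \<and> v \<in> tree_plus d"
proof (induction rule: reach.induct)
  case r0
  then show ?case by simp
next
  case (rs u v)
  then obtain w where v: "v = u @ w" "v \<in> tree_plus d"
    "length v - length u \<le> ((fun_upd \<omega> [] (max t (\<omega> [])))) u"
    by (auto simp: cone_def tree_le_def)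
  then have "length w \<le> eff t \<omega> u" by (auto simp: eff_def)
  then show ?case using rs v lemB by blast
qed

lemma infected_all_ipath: "v \<in> infected_all d \<omega> \<longleftrightarrow> v \<in> tree_plus d \<and> ipath 0 \<omega> v"
proof -
  have e: "fun_upd \<omega> [] (max 0 (\<omega> [])) = \<omega>" by auto
  show ?thesis unfolding infected_all_reach using lem4[where t=0 and d=d and \<omega>=\<omega> and v=v] lem7[where t=0 and d=d and \<omega>=\<omega> and v=v] e by auto
qed

lemma Surv_ipath: "Surv d n t \<omega> \<longleftrightarrow> (\<exists>v \<in> tree_plus d. length v = n \<and> ipath t \<omega> v)"
proof (induction n arbitrary: t \<omega>)
  case 0
  then show ?case by (auto intro: bexI[of _ "[]"])
next
  case (Suc n)
  show ?case
  proof
    assume "Surv d (Suc n) t \<omega>"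
    then obtain c where c: "c < d" "1 \<le> max t (\<omega> [])" "Surv d n (max t (\<omega> []) - 1) (sh c \<omega>)" by auto
    then obtain v where "v \<in> tree_plus d" "length v = n" "ipath (max t (\<omega> []) - 1) (sh c \<omega>) v"
      using Suc.IH by blast
    then show "\<exists>v \<in> tree_plus d. length v = Suc n \<and> ipath t \<omega> v"
      using c by (intro bexI[of _ "c # v"]) auto
  next
    assume "\<exists>v \<in> tree_plus d. length v = Suc n \<and> ipath t \<omega> v"
    then obtain c v where "c # v \<in> tree_plus d" "length v = n" "ipath t \<omega> (c # v)"
      by (metis length_Suc_conv)
    then show "Surv d (Suc n) t \<omega>" using Suc.IH by auto
  qed
qed

lemma ipath_prefix: "ipath t \<omega> (u @ w) \<Longrightarrow> ipath t \<omega> u"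
  by (induction u arbitrary: t \<omega>) auto

lemma infinite_Surv: "infinite (infected_all d \<omega>) \<longleftrightarrow> (\<forall>n. Surv d n 0 \<omega>)"
proof
  assume inf: "infinite (infected_all d \<omega>)"
  show "\<forall>n. Surv d n 0 \<omega>"
  proof
    fix n
    have fin: "finite {v. set v \<subseteq> {..<d} \<and> length v \<le> n}"
      by (rule finite_lists_length_le) simp
    have "\<not> infected_all d \<omega> \<subseteq> {v. set v \<subseteq> {..<d} \<and> length v \<le> n}"
      using inf fin finite_subset by blast
    then obtain v where v0: "v \<in> infected_all d \<omega>" "\<not> (set v \<subseteq> {..<d} \<and> length v \<le> n)"
      by blast
    then have vt: "v \<in> tree_plus d" "ipath 0 \<omega> v" using infected_all_ipath by auto
    with v0 have v: "\<not> length v \<le> n" by (auto simp: tree_plus_def)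
    from vt have "take n v \<in> tree_plus d" "ipath 0 \<omega> (take n v)"
      using ipath_prefix[of 0 \<omega> "take n v" "drop n v"]
      by (auto simp: tree_plus_def dest: in_set_takeD)
    moreover have "length (take n v) = n" using v by auto
    ultimately show "Surv d n 0 \<omega>" using Surv_ipath by blast
  qed
next
  assume all: "\<forall>n. Surv d n 0 \<omega>"
  show "infinite (infected_all d \<omega>)"
  proof
    assume fin: "finite (infected_all d \<omega>)"
    then obtain N where N: "\<forall>x \<in> length ` infected_all d \<omega>. x \<le> N"
      using finite_nat_set_iff_bounded_le by blast
    from all obtain v where "v \<in> tree_plus d" "length v = Suc N" "ipath 0 \<omega> v"
      using Surv_ipath by blast
    then have "v \<in> infected_all d \<omega>" using infected_all_ipath by blast
    with N \<open>length v = Suc N\<close> show False by force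
  qed
qed




lemma meas_coord: "(\<lambda>\<omega>. \<omega> x) \<in> measurable (PiM K (\<lambda>_. measure_pmf p)) (count_space UNIV)"
proof (cases "x \<in> K")
  case True
  then have "(\<lambda>\<omega>. \<omega> x) \<in> measurable (PiM K (\<lambda>_. measure_pmf p)) (measure_pmf p)"
    by (rule measurable_component_singleton)
  then show ?thesis by simp
next
  case False
  let ?N = "PiM K (\<lambda>_. measure_pmf p)"
  have eq: "\<And>\<omega>. \<omega> \<in> space ?N \<Longrightarrow> \<omega> x = undefined"
    using False by (auto simp: space_PiM PiE_def extensional_def)
  show ?thesis using measurable_cong[of ?N "\<lambda>\<omega>. \<omega> x" "\<lambda>_. undefined" "count_space UNIV"] eq by simp
qed

lemma meas_Surv:
  "(\<lambda>\<omega>. Surv d n t (\<lambda>u. \<omega> (w @ u))) \<in> measurable (PiM K (\<lambda>_. measure_pmf p)) (count_space UNIV)"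
proof (induction n arbitrary: t w)
  case 0
  then show ?case by simp
next
  case (Suc n)
  let ?N = "PiM K (\<lambda>_. measure_pmf p)"
  define f where "f = (\<lambda>r \<omega>. 1 \<le> max t r \<and> (\<exists>c\<in>{..<d}. Surv d n (max t r - 1) (\<lambda>u. \<omega> ((w @ [c]) @ u))))"
  have f: "(\<lambda>\<omega>. f r \<omega>) \<in> measurable ?N (count_space UNIV)" for r
  proof (cases "1 \<le> max t r")
    case True
    have "Measurable.pred ?N (\<lambda>\<omega>. \<exists>c\<in>{..<d}. Surv d n (max t r - 1) (\<lambda>u. \<omega> ((w @ [c]) @ u)))"
      by (rule pred_intros_finite(4)[where I="{..<d}" and P="\<lambda>\<omega> c. Surv d n (max t r - 1) (\<lambda>u. \<omega> ((w @ [c]) @ u))"])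
         (simp, rule Suc.IH)
    then show ?thesis using True by (simp add: f_def)
  next
    case False
    then have "(\<lambda>\<omega>. f r \<omega>) = (\<lambda>\<omega>. False)" unfolding f_def by blast
    then show ?thesis by simp
  qed
  have "(\<lambda>\<omega>. f (\<omega> w) \<omega>) \<in> measurable ?N (count_space UNIV)"
    by (rule measurable_compose_countable[OF f meas_coord])
  moreover have "(\<lambda>\<omega>. f (\<omega> w) \<omega>) = (\<lambda>\<omega>. Surv d (Suc n) t (\<lambda>u. \<omega> (w @ u)))"
    unfolding f_def by (simp add: sh_def lessThan_def)
  ultimately show ?case by simp
qed

lemma meas_Surv0:
  "(\<lambda>\<omega>. Surv d n t \<omega>) \<in> measurable (PiM K (\<lambda>_. measure_pmf p)) (count_space UNIV)"
  using meas_Surv[of d n t "[]" K p] by simp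

lemma Surv_local: "(\<And>u. u \<in> tree_plus d \<Longrightarrow> \<omega> u = \<omega>' u) \<Longrightarrow> Surv d n t \<omega> = Surv d n t \<omega>'"
proof (induction n arbitrary: t \<omega> \<omega>')
  case 0
  then show ?case by simp
next
  case (Suc n)
  have e: "\<omega> [] = \<omega>' []" using Suc.prems by simp
  have "Surv d n (max t (\<omega> []) - 1) (sh c \<omega>) = Surv d n (max t (\<omega> []) - 1) (sh c \<omega>')" if "c < d" for c
    by (rule Suc.IH) (use Suc.prems that in \<open>auto simp: sh_def\<close>)
  then show ?case using e by auto
qed

lemma Surv_Suc_mono: "Surv d (Suc n) t \<omega> \<Longrightarrow> Surv d n t \<omega>"
proof (induction n arbitrary: t \<omega>)
  case 0
  then show ?case by simp
next
  case (Suc n)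
  from Suc.prems obtain c where c: "c < d" "1 \<le> max t (\<omega> [])"
    "Surv d (Suc n) (max t (\<omega> []) - 1) (sh c \<omega>)"
    by (simp only: Surv.simps) blast
  from c(3) have "Surv d n (max t (\<omega> []) - 1) (sh c \<omega>)" by (rule Suc.IH)
  with c show ?case by (simp only: Surv.simps) blast
qed

lemma prob_space_cone: "prob_space (cone_space d p)"
  unfolding cone_space_def by (rule prob_space_PiM) (rule prob_space_measure_pmf)

lemma space_cone: "space (cone_space d p) = PiE (tree_plus d) (\<lambda>_. UNIV)"
  by (simp add: cone_space_def space_PiM)

definition F :: "nat \<Rightarrow> nat pmf \<Rightarrow> nat \<Rightarrow> nat \<Rightarrow> real" where
  "F d p n s = measure (cone_space d p) {\<omega> \<in> space (cone_space d p). \<not> Surv d n s \<omega>}"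

lemma indep_coord:
  "prob_space.indep_vars (cone_space d p) (\<lambda>_. measure_pmf p) (\<lambda>i \<omega>. \<omega> i) (tree_plus d)"
proof -
  interpret P: prob_space "cone_space d p" by (rule prob_space_cone)
  let ?M = "cone_space d p" and ?T = "tree_plus d"
  have rv: "P.random_variable (measure_pmf p) (\<lambda>\<omega>. \<omega> i)" if "i \<in> ?T" for i
    unfolding cone_space_def using that by (rule measurable_component_singleton)
  have "distr ?M (PiM ?T (\<lambda>_. measure_pmf p)) (\<lambda>x. \<lambda>i\<in>?T. x i) = distr ?M ?M (\<lambda>x. x)"
    by (rule distr_cong) (auto simp: cone_space_def space_PiM)
  also have "\<dots> = ?M" by simp
  also have "\<dots> = PiM ?T (\<lambda>i. distr ?M (measure_pmf p) (\<lambda>\<omega>. \<omega> i))"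
    unfolding cone_space_def
    by (rule PiM_cong[OF refl]) (rule distr_PiM_component[symmetric]; simp add: prob_space_measure_pmf)
  moreover have ne: "?T \<noteq> {}" using tree_Nil by blast
  ultimately show ?thesis
    by (subst P.indep_vars_iff_distr_eq_PiM'[OF ne rv]) auto
qed

lemma prob_root: "measure (cone_space d p) {\<omega> \<in> space (cone_space d p). \<omega> [] = r} = pmf p r"
proof -
  have "measure (cone_space d p) {\<omega> \<in> space (cone_space d p). \<omega> [] = r}
      = measure (distr (cone_space d p) (measure_pmf p) (\<lambda>\<omega>. \<omega> [])) {r}"
    by (subst measure_distr) (auto simp: cone_space_def intro!: arg_cong[where f="measure _"])
  also have "\<dots> = pmf p r"
    unfolding cone_space_def
    by (subst distr_PiM_component) (auto simp: prob_space_measure_pmf measure_pmf_single)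
  finally show ?thesis .
qed

lemma prob_child:
  assumes "c < d"
  shows "measure (cone_space d p) {\<omega> \<in> space (cone_space d p). \<not> Surv d n s (sh c \<omega>)} = F d p n s"
proof -
  let ?M = "cone_space d p" and ?T = "tree_plus d"
  define g :: "(nat list \<Rightarrow> nat) \<Rightarrow> nat list \<Rightarrow> nat" where "g = (\<lambda>\<omega>. \<lambda>u\<in>?T. \<omega> (c # u))"
  have D: "distr ?M ?M g = ?M"
    unfolding cone_space_def g_def
    using distr_PiM_reindex[of ?T "\<lambda>_. measure_pmf p" "Cons c" ?T] assms
    by (simp add: prob_space_measure_pmf inj_on_def)
  have gm: "g \<in> measurable ?M ?M"
    unfolding g_def cone_space_def
    by (rule measurable_restrict) (use assms in \<open>auto intro: measurable_component_singleton\<close>)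
  have S: "{\<omega> \<in> space ?M. \<not> Surv d n s \<omega>} \<in> sets ?M"
    using meas_Surv0[of d n s ?T p] unfolding cone_space_def
    by (simp add: Measurable.pred_def)
  have "F d p n s = measure (distr ?M ?M g) {\<omega> \<in> space ?M. \<not> Surv d n s \<omega>}"
    unfolding F_def D ..
  also have "\<dots> = measure ?M (g -` {\<omega> \<in> space ?M. \<not> Surv d n s \<omega>} \<inter> space ?M)"
    by (rule measure_distr[OF gm S])
  also have "g -` {\<omega> \<in> space ?M. \<not> Surv d n s \<omega>} \<inter> space ?M
      = {\<omega> \<in> space ?M. \<not> Surv d n s (sh c \<omega>)}"
  proof -
    have "Surv d n s (g \<omega>) = Surv d n s (sh c \<omega>)" for \<omega>
      by (rule Surv_local) (simp add: g_def sh_def)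
    moreover have "\<omega> \<in> space ?M \<Longrightarrow> g \<omega> \<in> space ?M" for \<omega>
      using gm by (simp add: measurable_space)
    ultimately show ?thesis by auto
  qed
  finally show ?thesis by simp
qed




lemma pred_coord_eq: "Measurable.pred (PiM K (\<lambda>_. measure_pmf p)) (\<lambda>\<omega>. \<omega> x = r)"
proof -
  have "Measurable.pred (PiM K (\<lambda>_. measure_pmf p)) (\<lambda>\<omega>. \<omega> x \<in> {r})"
    by (rule pred_sets2[OF _ meas_coord]) simp
  then show ?thesis by simp
qed

lemma pred_notSurv: "Measurable.pred (PiM K (\<lambda>_. measure_pmf p)) (\<lambda>\<omega>. \<not> Surv d n t (\<lambda>u. \<omega> (w @ u)))"
  by (rule pred_intros_logic(2)) (rule meas_Surv)

lemma key:
  "measure (cone_space d p) {\<omega> \<in> space (cone_space d p). \<omega> [] = r \<and> (\<forall>c<d. \<not> Surv d n s (sh c \<omega>))}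
     = pmf p r * F d p n s ^ d"
proof -
  let ?M = "cone_space d p" and ?T = "tree_plus d" and ?P = "\<lambda>_::nat list. measure_pmf p"
  interpret P: prob_space ?M by (rule prob_space_cone)
  define K :: "nat \<Rightarrow> nat list set" where "K j = (if j = 0 then {[]} else Cons (j - 1) ` ?T)" for j
  define L where "L = {..<Suc d}"
  have KT: "K j \<subseteq> ?T" if "j \<in> L" for j
    using that by (auto simp: K_def L_def)
  have disj: "disjoint_family_on K L"
    unfolding disjoint_family_on_def K_def by auto
  have ind: "P.indep_vars (\<lambda>j. PiM (K j) ?P) (\<lambda>j \<omega>. restrict (\<lambda>i. \<omega> i) (K j)) L"
    by (rule P.indep_vars_restrict[OF indep_coord KT disj])
  define A where "A j = (if j = 0 then {f \<in> space (PiM (K j) ?P). f [] = r}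
       else {g \<in> space (PiM (K j) ?P). \<not> Surv d n s (\<lambda>u. g ([j - 1] @ u))})" for j
  have Asets: "A j \<in> sets (PiM (K j) ?P)" if "j \<in> L" for j
  proof (cases "j = 0")
    case True
    then show ?thesis using pred_coord_eq[where K="K j" and p=p and x="[]" and r=r] by (simp add: A_def Measurable.pred_def)
  next
    case False
    then show ?thesis using pred_notSurv[where K="K j" and p=p and d=d and n=n and t=s and w="[j - 1]"] by (simp add: A_def Measurable.pred_def)
  qed
  define B where "B j = (if j = 0 then {\<omega> \<in> space ?M. \<omega> [] = r}
       else {\<omega> \<in> space ?M. \<not> Surv d n s (sh (j - 1) \<omega>)})" for j
  have AB: "(\<lambda>\<omega>. restrict (\<lambda>i. \<omega> i) (K j)) -` A j \<inter> space ?M = B j" if "j \<in> L" for j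
  proof (cases "j = 0")
    case True
    then show ?thesis by (auto simp: A_def B_def K_def space_PiM)
  next
    case False
    have "Surv d n s (\<lambda>u. restrict \<omega> (K j) ([j - 1] @ u)) = Surv d n s (sh (j - 1) \<omega>)" for \<omega>
      by (rule Surv_local) (use False that in \<open>auto simp: K_def sh_def L_def\<close>)
    then show ?thesis using False by (auto simp: A_def B_def space_PiM)
  qed
  have "P.prob (\<Inter>j\<in>L. (\<lambda>\<omega>. restrict (\<lambda>i. \<omega> i) (K j)) -` A j \<inter> space ?M)
      = (\<Prod>j\<in>L. P.prob ((\<lambda>\<omega>. restrict (\<lambda>i. \<omega> i) (K j)) -` A j \<inter> space ?M))"
    by (rule P.indep_varsD[OF ind]) (auto simp: L_def Asets)
  then have E: "P.prob (\<Inter>j\<in>L. B j) = (\<Prod>j\<in>L. P.prob (B j))"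
    using AB by simp
  have "(\<Inter>j\<in>L. B j) = {\<omega> \<in> space ?M. \<omega> [] = r \<and> (\<forall>c<d. \<not> Surv d n s (sh c \<omega>))}"
  proof
    show "(\<Inter>j\<in>L. B j) \<subseteq> {\<omega> \<in> space ?M. \<omega> [] = r \<and> (\<forall>c<d. \<not> Surv d n s (sh c \<omega>))}"
    proof
      fix \<omega> assume a: "\<omega> \<in> (\<Inter>j\<in>L. B j)"
      have "\<omega> \<in> B 0" using a by (auto simp: L_def)
      moreover have "\<not> Surv d n s (sh c \<omega>)" if "c < d" for c
        using a that by (auto simp: L_def B_def dest!: bspec[where x="Suc c"])
      ultimately show "\<omega> \<in> {\<omega> \<in> space ?M. \<omega> [] = r \<and> (\<forall>c<d. \<not> Surv d n s (sh c \<omega>))}"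
        by (auto simp: B_def)
    qed
    show "{\<omega> \<in> space ?M. \<omega> [] = r \<and> (\<forall>c<d. \<not> Surv d n s (sh c \<omega>))} \<subseteq> (\<Inter>j\<in>L. B j)"
      by (auto simp: L_def B_def)
  qed
  moreover have "(\<Prod>j\<in>L. P.prob (B j)) = pmf p r * F d p n s ^ d"
  proof -
    have "(\<Prod>j\<in>L. P.prob (B j)) = P.prob (B 0) * (\<Prod>c<d. P.prob (B (Suc c)))"
      unfolding L_def by (rule prod.lessThan_Suc_shift)
    also have "P.prob (B 0) = pmf p r" by (simp add: B_def prob_root)
    also have "(\<Prod>c<d. P.prob (B (Suc c))) = (\<Prod>c<d. F d p n s)"
      by (rule prod.cong) (auto simp: B_def prob_child)
    finally show ?thesis by simp
  qed
  ultimately show ?thesis using E by simp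
qed

lemma sets_E: "{\<omega> \<in> space (cone_space d p). \<omega> [] = r \<and> \<not> Surv d (Suc n) t \<omega>} \<in> sets (cone_space d p)"
proof -
  have a: "Measurable.pred (PiM (tree_plus d) (\<lambda>_. measure_pmf p)) (\<lambda>\<omega>. \<omega> [] = r)"
    by (rule pred_coord_eq)
  have b: "Measurable.pred (PiM (tree_plus d) (\<lambda>_. measure_pmf p)) (\<lambda>\<omega>. \<not> Surv d (Suc n) t \<omega>)"
    using pred_notSurv[where K="tree_plus d" and p=p and d=d and n="Suc n" and t=t and w="[]"]
    by (simp only: append_Nil)
  show ?thesis using pred_intros_logic(3)[OF a b]
    unfolding Measurable.pred_def cone_space_def .
qed

lemma sets_notSurv: "{\<omega> \<in> space (cone_space d p). \<not> Surv d n t \<omega>} \<in> sets (cone_space d p)"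
  using pred_notSurv[where K="tree_plus d" and p=p and d=d and n=n and t=t and w="[]"]
  unfolding Measurable.pred_def cone_space_def by (simp only: append_Nil)

lemma sets_Surv: "{\<omega> \<in> space (cone_space d p). Surv d n t \<omega>} \<in> sets (cone_space d p)"
  using meas_Surv0[where K="tree_plus d" and p=p and d=d and n=n and t=t]
  unfolding cone_space_def Measurable.pred_def .

lemma F_Suc:
  "(\<lambda>r. pmf p r * (if max t r = 0 then 1 else F d p n (max t r - 1) ^ d)) sums F d p (Suc n) t"
proof -
  let ?M = "cone_space d p"
  interpret P: prob_space ?M by (rule prob_space_cone)
  define E where "E r = {\<omega> \<in> space ?M. \<omega> [] = r \<and> \<not> Surv d (Suc n) t \<omega>}" for r
  have Es: "range E \<subseteq> sets ?M"
    using sets_E[of d p _ n t] by (auto simp only: E_def image_subset_iff)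
  have dj: "disjoint_family E" by (auto simp: disjoint_family_on_def E_def)
  have U: "(\<Union>r. E r) = {\<omega> \<in> space ?M. \<not> Surv d (Suc n) t \<omega>}" by (auto simp: E_def)
  have ME: "measure ?M (E r) = pmf p r * (if max t r = 0 then 1 else F d p n (max t r - 1) ^ d)" for r
  proof (cases "max t r = 0")
    case True
    then have "E r = {\<omega> \<in> space ?M. \<omega> [] = r}" by (auto simp: E_def)
    then show ?thesis using True by (simp add: prob_root)
  next
    case False
    then have "E r = {\<omega> \<in> space ?M. \<omega> [] = r \<and> (\<forall>c<d. \<not> Surv d n (max t r - 1) (sh c \<omega>))}"
      by (auto simp: E_def)
    then have "measure ?M (E r) = pmf p r * F d p n (max t r - 1) ^ d" by (simp only: key)
    then show ?thesis using False by (simp only: if_False)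
  qed
  show ?thesis
    using P.finite_measure_UNION[OF Es dj] unfolding U ME F_def .
qed

lemma F_0: "F d p 0 t = 0"
  by (simp add: F_def)

lemma F_mono: "F d p n t \<le> F d p (Suc n) t"
proof -
  let ?M = "cone_space d p"
  interpret P: prob_space ?M by (rule prob_space_cone)
  have "{\<omega> \<in> space ?M. \<not> Surv d (Suc n) t \<omega>} \<in> sets ?M" by (rule sets_notSurv)
  then show ?thesis unfolding F_def
    by (rule P.finite_measure_mono[rotated]) (auto intro: Surv_Suc_mono simp del: Surv.simps)
qed

lemma F_bounds: "0 \<le> F d p n t" "F d p n t \<le> 1"
proof -
  interpret P: prob_space "cone_space d p" by (rule prob_space_cone)
  show "0 \<le> F d p n t" "F d p n t \<le> 1" by (simp_all add: F_def)
qed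

lemma survival_eq: "survival d p = (\<Inter>n. {\<omega> \<in> space (cone_space d p). Surv d n 0 \<omega>})"
  unfolding survival_def using infinite_Surv by auto

lemma survival_lim:
  "(\<lambda>n. 1 - F d p n 0) \<longlonglongrightarrow> prob_space.prob (cone_space d p) (survival d p)"
proof -
  let ?M = "cone_space d p"
  define S where "S n = {\<omega> \<in> space ?M. Surv d n 0 \<omega>}" for n
  have Ss: "S n \<in> sets ?M" for n unfolding S_def by (rule sets_Surv)
  have dec: "decseq S"
    unfolding decseq_Suc_iff S_def using Surv_Suc_mono by blast
  have rs: "range S \<subseteq> sets ?M" using Ss by blast
  have SV: "(\<Inter>n. S n) = survival d p" by (simp only: survival_eq S_def)
  have c: "{\<omega> \<in> space ?M. \<not> Surv d n 0 \<omega>} = space ?M - S n" for n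
    unfolding S_def by blast
  interpret P: prob_space ?M by (rule prob_space_cone)
  have lim: "(\<lambda>n. P.prob (S n)) \<longlonglongrightarrow> P.prob (\<Inter>n. S n)"
    by (rule P.finite_Lim_measure_decseq[OF rs dec])
  have "P.prob (S n) = 1 - F d p n 0" for n
    using P.prob_compl[OF Ss[of n]] unfolding F_def c by linarith
  then show ?thesis using lim unfolding SV by presburger
qed





lemma summable_pmf_nat: "summable (\<lambda>r. pmf (p :: nat pmf) r)"
proof -
  have "summable (\<lambda>x. norm (pmf p x))"
    using integrable_pmf[of UNIV p] by (simp only: integrable_count_space_nat_iff)
  then show ?thesis by simp
qed

lemma E_sum:
  fixes p :: "nat pmf" and h :: "nat \<Rightarrow> real"
  assumes B: "\<And>r. \<bar>h r\<bar> \<le> B"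
  shows "(\<lambda>r. pmf p r * h r) sums measure_pmf.expectation p h"
proof -
  have sm: "summable (\<lambda>x. norm (pmf p x * h x))"
  proof (rule summable_comparison_test')
    show "summable (\<lambda>x. B * pmf p x)" by (rule summable_mult) (rule summable_pmf_nat)
    show "norm (norm (pmf p x * h x)) \<le> B * pmf p x" for x
      using B[of x] by (simp add: abs_mult mult.commute mult_right_mono)
  qed
  have int: "integrable (count_space UNIV) (\<lambda>x. pmf p x * h x)"
    using sm by (simp only: integrable_count_space_nat_iff)
  have "measure_pmf.expectation p h = integral\<^sup>L (count_space UNIV) (\<lambda>x. pmf p x *\<^sub>R h x)"
    unfolding measure_pmf_eq_density by (rule integral_density) auto
  then show ?thesis using sums_integral_count_space_nat[OF int] by simp
qed

lemma pmf_sums1: "(\<lambda>r. pmf (p :: nat pmf) r) sums 1"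
  using E_sum[of "\<lambda>_. 1" 1 p] by simp

lemma lower_bound:
  fixes d :: nat and p :: "nat pmf" and \<rho> :: real
  assumes r0: "\<rho> \<ge> 0" and r1: "\<rho> \<le> 1"
    and eq: "measure_pmf.expectation p (\<lambda>k. \<rho> ^ (d ^ k)) + (1 - \<rho>) * pmf p 0 = \<rho>"
  shows "F d p n t \<le> \<rho> ^ (d ^ t)"
proof (induction n arbitrary: t)
  case 0
  then show ?case using r0 by (simp add: F_0)
next
  case (Suc n)
  define h where "h r = (if max t r = 0 then 1 else F d p n (max t r - 1) ^ d)" for r
  define g where "g r = (if max t r = 0 then 1 else \<rho> ^ (d ^ max t r))" for r
  have hs: "(\<lambda>r. pmf p r * h r) sums F d p (Suc n) t" unfolding h_def by (rule F_Suc)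
  have hg: "pmf p r * h r \<le> pmf p r * g r" for r
  proof (cases "max t r = 0")
    case True
    then show ?thesis by (simp add: h_def g_def)
  next
    case False
    then obtain m where m: "max t r = Suc m" by (cases "max t r") auto
    have "F d p n m ^ d \<le> (\<rho> ^ (d ^ m)) ^ d"
      by (rule power_mono[OF Suc.IH F_bounds(1)])
    also have "\<dots> = \<rho> ^ (d ^ Suc m)" by (simp add: power_mult[symmetric] mult.commute)
    finally show ?thesis using m by (simp add: h_def g_def mult_left_mono)
  qed
  show ?case
  proof (cases "t = 0")
    case True
    have "(\<lambda>r. pmf p r * \<rho> ^ (d ^ r) + (if r = 0 then pmf p 0 * (1 - \<rho>) else 0)) sums
         (measure_pmf.expectation p (\<lambda>k. \<rho> ^ (d ^ k)) + pmf p 0 * (1 - \<rho>))"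
    proof (rule sums_add)
      show "(\<lambda>r. pmf p r * \<rho> ^ (d ^ r)) sums measure_pmf.expectation p (\<lambda>k. \<rho> ^ (d ^ k))"
        by (rule E_sum[where B=1]) (use r0 r1 in \<open>simp add: power_le_one\<close>)
      show "(\<lambda>r. if r = 0 then pmf p 0 * (1 - \<rho>) else 0) sums (pmf p 0 * (1 - \<rho>))"
        using sums_single[of 0 "\<lambda>_. pmf p 0 * (1 - \<rho>)"] by simp
    qed
    moreover have "pmf p r * g r = pmf p r * \<rho> ^ (d ^ r) + (if r = 0 then pmf p 0 * (1 - \<rho>) else 0)" for r
      using True by (simp add: g_def algebra_simps)
    ultimately have gs: "(\<lambda>r. pmf p r * g r) sums \<rho>" using eq by (simp add: algebra_simps)
    have "F d p (Suc n) t \<le> \<rho>" by (rule sums_le[OF hg hs gs])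
    then show ?thesis using True by simp
  next
    case False
    have "pmf p r * g r \<le> pmf p r * \<rho> ^ (d ^ t)" for r
    proof -
      have "d ^ t \<le> d ^ max t r \<or> d = 0"
        by (cases "d = 0") (auto intro: power_increasing)
      then have "\<rho> ^ (d ^ max t r) \<le> \<rho> ^ (d ^ t)"
        using r0 r1 False by (auto intro: power_decreasing simp: zero_power)
      then show ?thesis using False by (simp add: g_def mult_left_mono)
    qed
    then have hle2: "pmf p r * h r \<le> pmf p r * \<rho> ^ (d ^ t)" for r using hg order_trans by blast
    have s2: "(\<lambda>r. pmf p r * \<rho> ^ (d ^ t)) sums (1 * \<rho> ^ (d ^ t))"
      by (rule sums_mult2[OF pmf_sums1])
    from sums_le[OF hle2 hs s2] show ?thesis by simp
  qed
qed





fun ee :: "nat \<Rightarrow> nat \<Rightarrow> nat" where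
  "ee d 0 = 1"
| "ee d (Suc k) = 1 + d * ee d k"

definition Nn :: "nat \<Rightarrow> nat \<Rightarrow> nat" where
  "Nn d r = (if r = 0 then 0 else d * ee d (r - 1))"

lemma ee_real: "(real d - 1) * real (ee d k) = real d ^ Suc k - 1"
proof (induction k)
  case 0
  then show ?case by simp
next
  case (Suc k)
  have "(real d - 1) * real (ee d (Suc k)) = (real d - 1) + real d * ((real d - 1) * real (ee d k))"
    by (simp add: algebra_simps)
  also have "\<dots> = (real d - 1) + real d * (real d ^ Suc k - 1)" using Suc.IH by simp
  also have "\<dots> = real d ^ Suc (Suc k) - 1" by (simp add: algebra_simps)
  finally show ?case .
qed

lemma Nn_real:
  assumes "d \<ge> 2"
  shows "real (Nn d k) = real d / (real d - 1) * (real d ^ k - 1)"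
proof (cases k)
  case 0
  then show ?thesis by (simp add: Nn_def)
next
  case (Suc j)
  have ne: "real d - 1 \<noteq> 0" using assms by simp
  have "real d / (real d - 1) * (real d ^ k - 1) = real d / (real d - 1) * ((real d - 1) * real (ee d j))"
    using ee_real[of d j] Suc by simp
  also have "\<dots> = real d * real (ee d j)" using ne by (simp add: field_simps)
  finally show ?thesis using Suc by (simp add: Nn_def)
qed

lemma cpow_nat: "x \<ge> 0 \<Longrightarrow> cpow x (real m) = x ^ m"
proof (cases "m = 0")
  case True
  then show ?thesis by (simp add: cpow_def)
next
  case False
  assume x: "x \<ge> 0"
  show ?thesis
  proof (cases "x = 0")
    case True
    then show ?thesis using False by (simp add: cpow_def)
  next
    case False': False
    then have "x > 0" using x by simp
    then show ?thesis using False by (simp add: cpow_def powr_realpow)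
  qed
qed

lemma F_lim:
  "(\<lambda>n. F d p n t) \<longlonglongrightarrow> (SUP n. F d p n t)"
proof (rule LIMSEQ_incseq_SUP)
  show "bdd_above (range (\<lambda>n. F d p n t))"
    by (intro bdd_aboveI2[where M=1] F_bounds(2))
  show "incseq (\<lambda>n. F d p n t)" by (rule incseq_SucI) (rule F_mono)
qed

lemma step_i:
  "F d p (Suc n) 0 * F d p n j ^ d \<le> F d p (Suc n) (Suc j)"
proof -
  define h0 where "h0 r = (if r = 0 then 1 else F d p n (r - 1) ^ d)" for r
  define hk where "hk r = F d p n (max (Suc j) r - 1) ^ d" for r
  define c where "c = F d p n j ^ d"
  have s0: "(\<lambda>r. pmf p r * h0 r) sums F d p (Suc n) 0"
    using F_Suc[of p 0 d n] unfolding h0_def by (simp only: max_0L)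
  have sk: "(\<lambda>r. pmf p r * hk r) sums F d p (Suc n) (Suc j)"
    using F_Suc[of p "Suc j" d n] by (simp add: hk_def)
  have s0c: "(\<lambda>r. pmf p r * h0 r * c) sums (F d p (Suc n) 0 * c)"
    by (rule sums_mult2[OF s0])
  have c01: "0 \<le> c" "c \<le> 1" unfolding c_def using F_bounds
    by (auto intro: power_le_one)
  have h01: "0 \<le> h0 r" "h0 r \<le> 1" for r unfolding h0_def using F_bounds
    by (auto intro: power_le_one)
  have "pmf p r * h0 r * c \<le> pmf p r * hk r" for r
  proof (cases "r \<le> Suc j")
    case True
    then have "hk r = c" by (simp add: hk_def c_def max_def)
    moreover have "h0 r * c \<le> c" using h01[of r] c01 by (simp add: mult_left_le_one_le)
    ultimately show ?thesis by (simp add: mult.assoc mult_left_mono)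
  next
    case False
    then have "hk r = h0 r" by (simp add: hk_def h0_def max_def)
    moreover have "h0 r * c \<le> h0 r" using h01[of r] c01 by (simp add: mult_right_le_one_le)
    ultimately show ?thesis by (simp add: mult.assoc mult_left_mono)
  qed
  then show ?thesis using sums_le[OF _ s0c sk] by (simp add: c_def)
qed

lemma F_Suc_0_partial:
  "(\<Sum>r<R. pmf p r * (if r = 0 then 1 else F d p n (r - 1) ^ d)) \<le> F d p (Suc n) 0"
proof -
  have s: "(\<lambda>r. pmf p r * (if r = 0 then 1 else F d p n (r - 1) ^ d)) sums F d p (Suc n) 0"
    using F_Suc[of p 0 d n] by (simp only: max_0L)
  have nn: "0 \<le> pmf p r * (if r = 0 then 1 else F d p n (r - 1) ^ d)" for r
    using F_bounds by simp
  show ?thesis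
    using sum_le_suminf[OF sums_summable[OF s], of "{..<R}"] nn sums_unique[OF s] by simp
qed

lemma upper_main:
  fixes d :: nat and p :: "nat pmf" and \<psi> :: real
  assumes d2: "d \<ge> 2"
    and min\<psi>: "\<And>x. x \<ge> 0 \<Longrightarrow> measure_pmf.expectation p
           (\<lambda>k. cpow x (real d / (real d - 1) * (real d ^ k - 1))) = x \<Longrightarrow> \<psi> \<le> x"
  shows "\<psi> \<le> (SUP n. F d p n 0)"
proof -
  define f where "f t = (SUP n. F d p n t)" for t
  have lim: "(\<lambda>n. F d p n t) \<longlonglongrightarrow> f t" for t unfolding f_def by (rule F_lim)
  have f0: "0 \<le> f t" for t
    by (rule LIMSEQ_le_const[OF lim]) (use F_bounds in auto)
  have f1: "f t \<le> 1" for t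
    by (rule LIMSEQ_le_const2[OF lim]) (use F_bounds in auto)
  have Ff: "F d p n t \<le> f t" for n t
    by (rule incseq_le[OF _ lim]) (rule incseq_SucI, rule F_mono)
  have ii: "f 0 * f j ^ d \<le> f (Suc j)" for j
  proof (rule LIMSEQ_le)
    show "(\<lambda>n. F d p (Suc n) 0 * F d p n j ^ d) \<longlonglongrightarrow> f 0 * f j ^ d"
      by (intro tendsto_mult tendsto_power LIMSEQ_Suc[OF lim] lim)
    show "(\<lambda>n. F d p (Suc n) (Suc j)) \<longlonglongrightarrow> f (Suc j)"
      by (rule LIMSEQ_Suc[OF lim])
    show "\<exists>N. \<forall>n\<ge>N. F d p (Suc n) 0 * F d p n j ^ d \<le> F d p (Suc n) (Suc j)"
      using step_i by blast
  qed
  have iii: "f 0 ^ ee d k \<le> f k" for k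
  proof (induction k)
    case 0
    then show ?case by simp
  next
    case (Suc k)
    have "f 0 ^ ee d (Suc k) = f 0 * (f 0 ^ ee d k) ^ d"
      by (simp add: power_mult[symmetric] mult.commute)
    also have "\<dots> \<le> f 0 * f k ^ d"
      by (intro mult_left_mono power_mono Suc.IH) (auto intro: f0 zero_le_power)
    also have "\<dots> \<le> f (Suc k)" by (rule ii)
    finally show ?case .
  qed
  define hinf where "hinf r = (if r = 0 then 1 else f (r - 1) ^ d)" for r
  have hle: "f 0 ^ Nn d r \<le> hinf r" for r
  proof (cases r)
    case 0
    then show ?thesis by (simp add: Nn_def hinf_def)
  next
    case (Suc j)
    have "f 0 ^ Nn d r = (f 0 ^ ee d j) ^ d" using Suc by (simp add: Nn_def power_mult[symmetric] mult.commute)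
    also have "\<dots> \<le> f j ^ d" by (intro power_mono iii) (simp add: f0)
    finally show ?thesis using Suc by (simp add: hinf_def)
  qed
  have part: "(\<Sum>r<R. pmf p r * hinf r) \<le> f 0" for R
  proof (rule LIMSEQ_le_const2)
    show "(\<lambda>n. \<Sum>r<R. pmf p r * (if r = 0 then 1 else F d p n (r - 1) ^ d)) \<longlonglongrightarrow> (\<Sum>r<R. pmf p r * hinf r)"
      unfolding hinf_def
      by (intro tendsto_sum tendsto_mult_left) (auto intro!: tendsto_power lim)
    show "\<exists>N. \<forall>n\<ge>N. (\<Sum>r<R. pmf p r * (if r = 0 then 1 else F d p n (r - 1) ^ d)) \<le> f 0"
      using F_Suc_0_partial Ff order_trans by blast
  qed
  define G :: "real \<Rightarrow> real" where "G x = measure_pmf.expectation p (\<lambda>k. x ^ Nn d k)" for x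
  have Gs: "(\<lambda>r. pmf p r * x ^ Nn d r) sums G x" if "0 \<le> x" "x \<le> 1" for x
    unfolding G_def by (rule E_sum[where B=1]) (use that in \<open>auto simp: power_le_one abs_le_iff\<close>)
  have Gf: "G (f 0) \<le> f 0"
  proof -
    have "G (f 0) = (\<Sum>r. pmf p r * f 0 ^ Nn d r)" using Gs[OF f0 f1] by (simp add: sums_unique)
    also have "\<dots> \<le> f 0"
    proof (rule suminf_le_const)
      show "summable (\<lambda>r. pmf p r * f 0 ^ Nn d r)" using Gs[OF f0 f1] by (rule sums_summable)
      show "(\<Sum>r<R. pmf p r * f 0 ^ Nn d r) \<le> f 0" for R
        using part[of R] sum_mono[of "{..<R}" "\<lambda>r. pmf p r * f 0 ^ Nn d r" "\<lambda>r. pmf p r * hinf r"] hle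
        by (smt (verit) mult_left_mono pmf_nonneg)
    qed
    finally show ?thesis .
  qed
  have Gmono: "G x \<le> G y" if "0 \<le> x" "x \<le> y" "y \<le> 1" for x y
    by (rule sums_le[OF _ Gs Gs]) (use that in \<open>auto intro!: mult_left_mono power_mono\<close>)
  have G01: "0 \<le> G x \<and> G x \<le> 1" if "0 \<le> x" "x \<le> 1" for x
  proof
    show "0 \<le> G x" by (rule sums_le[OF _ sums_zero Gs]) (use that in auto)
    show "G x \<le> 1"
      using sums_le[OF _ Gs[OF that] pmf_sums1[of p]] that
      by (simp add: mult_left_le power_le_one)
  qed
  define xs where "xs n = (G ^^ n) 0" for n
  have xsS: "xs (Suc n) = G (xs n)" for n by (simp add: xs_def)
  have xs01: "0 \<le> xs n \<and> xs n \<le> 1" for n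
    by (induction n) (auto simp: xsS xs_def G01)
  have xsf: "xs n \<le> f 0" for n
  proof (induction n)
    case 0
    then show ?case by (simp add: xs_def f0)
  next
    case (Suc n)
    have "G (xs n) \<le> G (f 0)" using xs01[of n] Suc f1 by (intro Gmono) auto
    then show ?case using Gf by (simp add: xsS)
  qed
  have inc: "incseq xs"
  proof (rule incseq_SucI)
    show "xs n \<le> xs (Suc n)" for n
    proof (induction n)
      case 0
      then show ?case using G01[of 0] by (simp add: xs_def)
    next
      case (Suc n)
      then show ?case using xs01[of n] xs01[of "Suc n"] by (simp only: xsS) (rule Gmono; simp)
    qed
  qed
  define L where "L = (SUP n. xs n)"
  have limx: "xs \<longlonglongrightarrow> L"
    unfolding L_def by (rule LIMSEQ_incseq_SUP[OF _ inc]) (intro bdd_aboveI2[where M=1], use xs01 in blast)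
  have L0: "0 \<le> L" by (rule LIMSEQ_le_const[OF limx]) (use xs01 in auto)
  have L1: "L \<le> 1" by (rule LIMSEQ_le_const2[OF limx]) (use xs01 in auto)
  have Lf: "L \<le> f 0" by (rule LIMSEQ_le_const2[OF limx]) (use xsf in auto)
  have limG: "(\<lambda>n. G (xs n)) \<longlonglongrightarrow> G L"
    unfolding G_def
  proof (rule integral_dominated_convergence[where w="\<lambda>_. 1"])
    show "AE k in measure_pmf p. (\<lambda>n. xs n ^ Nn d k) \<longlonglongrightarrow> L ^ Nn d k"
      by (intro AE_I2 tendsto_power limx)
    show "AE k in measure_pmf p. norm (xs n ^ Nn d k) \<le> 1" for n
      using xs01[of n] by (intro AE_I2) (simp add: power_le_one abs_le_iff)
  qed simp_all
  have GL: "G L = L"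
  proof (rule LIMSEQ_unique[OF limG])
    show "(\<lambda>n. G (xs n)) \<longlonglongrightarrow> L" using LIMSEQ_Suc[OF limx] by (simp add: xsS)
  qed
  have "(\<lambda>k. cpow L (real d / (real d - 1) * (real d ^ k - 1))) = (\<lambda>k. L ^ Nn d k)"
    using Nn_real[OF d2] cpow_nat[OF L0] by (metis)
  then have "measure_pmf.expectation p (\<lambda>k. cpow L (real d / (real d - 1) * (real d ^ k - 1))) = L"
    using GL by (simp add: G_def)
  then have "\<psi> \<le> L" using min\<psi> L0 by blast
  then show ?thesis using Lf by (simp add: f_def)
qed





theorem theorem2:
  fixes d :: nat and p :: "nat pmf" and \<rho> \<psi> :: real
  assumes "d \<ge> 2"
    and "0 < pmf p 0" and "pmf p 0 < 1"
    and "\<rho> \<ge> 0"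
    and "measure_pmf.expectation p (\<lambda>k. \<rho> ^ (d ^ k)) + (1 - \<rho>) * pmf p 0 = \<rho>"
    and "\<And>x. x \<ge> 0 \<Longrightarrow> measure_pmf.expectation p (\<lambda>k. x ^ (d ^ k)) + (1 - x) * pmf p 0 = x
           \<Longrightarrow> \<rho> \<le> x"
    and "\<psi> \<ge> 0"
    and "measure_pmf.expectation p
           (\<lambda>k. cpow \<psi> (real d / (real d - 1) * (real d ^ k - 1))) = \<psi>"
    and "\<And>x. x \<ge> 0 \<Longrightarrow> measure_pmf.expectation p
           (\<lambda>k. cpow x (real d / (real d - 1) * (real d ^ k - 1))) = x \<Longrightarrow> \<psi> \<le> x"
  shows "1 - \<rho> \<le> prob_space.prob (cone_space d p) (survival d p)
       \<and> prob_space.prob (cone_space d p) (survival d p) \<le> 1 - \<psi>"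
proof -
  have e1: "measure_pmf.expectation p (\<lambda>k. (1::real) ^ (d ^ k)) = 1"
    using E_sum[of "\<lambda>k. (1::real) ^ (d ^ k)" 1 p] pmf_sums1[of p] sums_unique2 by fastforce
  have r1: "\<rho> \<le> 1" using assms(6)[of 1] e1 by simp
  have lb: "F d p n 0 \<le> \<rho>" for n
    using lower_bound[where d=d and p=p and \<rho>=\<rho> and n=n and t=0, OF assms(4) r1 assms(5)] by simp
  have lim: "(\<lambda>n. 1 - F d p n 0) \<longlonglongrightarrow> prob_space.prob (cone_space d p) (survival d p)"
    by (rule survival_lim)
  have lim2: "(\<lambda>n. 1 - F d p n 0) \<longlonglongrightarrow> 1 - (SUP n. F d p n 0)"
    by (intro tendsto_diff tendsto_const F_lim)
  have eqV: "prob_space.prob (cone_space d p) (survival d p) = 1 - (SUP n. F d p n 0)"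
    using LIMSEQ_unique[OF lim lim2] .
  have up: "\<psi> \<le> (SUP n. F d p n 0)" by (rule upper_main[OF assms(1) assms(9)])
  have low: "1 - \<rho> \<le> prob_space.prob (cone_space d p) (survival d p)"
    by (rule LIMSEQ_le_const[OF lim]) (use lb in auto)
  show ?thesis using low up eqV by simp
qed



end
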